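(* Let $k\ge1$, $n\ge 2k+1$ and $l\ge 2$. Then $\mathrm{ex}(J(n;k,k+1),C_{2l})\ge \binom{n}{k+1}=\frac{1}{k+1}e(J(n;k,k+1))$.
   Context: The doubled Johnson graph $J(n;k,k+1)$ is the bipartite graph with vertex set $\binom{[n]}{k}\cup\binom{[n]}{k+1}$ (subsets of $[n]$), where two vertices $u,v$ are adjacent iff $u\subset v$ or $v\subset u$. $\mathrm{ex}(G,H)$ is the maximum number of edges of a subgraph of $G$ containing no subgraph isomorphic to $H$; $C_m$ is the cycle of length $m$. *)

theory Defs
  imports Main
begin

text \<open>Simple graphs are represented by their edge set: a set of 2-element sets of vertices.\<close>

definition doubled_johnson :: "nat \<Rightarrow> nat \<Rightarrow> nat set set set" where
  "doubled_johnson n k = {{A, B} | A B. A \<subseteq> {0..<n} \<and> B \<subseteq> {0..<n} \<and>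
       card A = k \<and> card B = k + 1 \<and> A \<subseteq> B}"

definition contains_cycle :: "'a set set \<Rightarrow> nat \<Rightarrow> bool" where
  "contains_cycle F m \<longleftrightarrow> (\<exists>f :: nat \<Rightarrow> 'a. inj_on f {..<m} \<and>
       (\<forall>i<m. {f i, f ((i + 1) mod m)} \<in> F))"

definition ex_cycle :: "'a set set \<Rightarrow> nat \<Rightarrow> nat" where
  "ex_cycle E m = Max {card F | F. F \<subseteq> E \<and> \<not> contains_cycle F m}"

end

theory Submission
  imports Defs
begin

definition Fsel :: "nat \<Rightarrow> nat \<Rightarrow> nat set set set" where
  "Fsel n k = (\<lambda>B. {B - {Max B}, B}) ` {B. B \<subseteq> {0..<n} \<and> card B = k + 1}"

lemma card_del_max:
  assumes "B \<subseteq> {0..<(n::nat)}" "card B = k + 1"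
  shows "card (B - {Max B}) = k" "Max B \<in> B" "finite B"
proof -
  show fB: "finite B" using assms(1) by (rule finite_subset) simp
  have "B \<noteq> {}" using assms(2) by auto
  then show m: "Max B \<in> B" using fB by simp
  show "card (B - {Max B}) = k" using fB m assms(2) by simp
qed

lemma Fsel_edge:
  assumes "{X, Y} \<in> Fsel n k" "card Y = k + 1"
  shows "X = Y - {Max Y}"
proof -
  obtain B where B: "B \<subseteq> {0..<n}" "card B = k + 1" "{X, Y} = {B - {Max B}, B}"
    using assms(1) unfolding Fsel_def by auto
  have c: "card (B - {Max B}) = k" using card_del_max[OF B(1,2)] by simp
  have "Y \<noteq> B - {Max B}" using c assms(2) by auto
  hence "Y = B" using B(3) unfolding doubleton_eq_iff by blast
  thus ?thesis using B(3) unfolding doubleton_eq_iff by blast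
qed

lemma Fsel_card_edge:
  assumes "{X, Y} \<in> Fsel n k"
  shows "card X = k + 1 \<or> card Y = k + 1"
  using assms unfolding Fsel_def by (auto simp: doubleton_eq_iff)

lemma Fsel_nocycle:
  assumes "m \<ge> 4"
  shows "\<not> contains_cycle (Fsel n k) m"
proof
  assume "contains_cycle (Fsel n k) m"
  then obtain f :: "nat \<Rightarrow> nat set" where inj: "inj_on f {..<m}"
    and e: "\<forall>i<m. {f i, f ((i + 1) mod m)} \<in> Fsel n k"
    unfolding contains_cycle_def by blast
  have e0: "{f 0, f 1} \<in> Fsel n k" using e[rule_format, of 0] assms by simp
  have e1: "{f 1, f 2} \<in> Fsel n k" using e[rule_format, of 1] assms by (simp add: numeral_2_eq_2)
  have e2: "{f 2, f 3} \<in> Fsel n k" using e[rule_format, of 2] assms by (simp add: numeral_2_eq_2 numeral_3_eq_3)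
  have sym: "\<And>a b. {a, b} = {b, a}" by (simp add: insert_commute)
  show False
  proof (cases "card (f 1) = k + 1")
    case True
    have "f 0 = f 1 - {Max (f 1)}" using Fsel_edge[OF e0 True] .
    moreover have "f 2 = f 1 - {Max (f 1)}" using Fsel_edge[of "f 2" "f 1", OF _ True] e1 by (simp add: insert_commute)
    ultimately have "f 0 = f 2" by simp
    hence "(0::nat) = 2" using assms by (intro inj_onD[OF inj]) auto
    thus False by simp
  next
    case False
    hence T: "card (f 2) = k + 1" using Fsel_card_edge[OF e1] by simp
    have "f 1 = f 2 - {Max (f 2)}" using Fsel_edge[OF e1 T] .
    moreover have "f 3 = f 2 - {Max (f 2)}" using Fsel_edge[of "f 3" "f 2", OF _ T] e2 by (simp add: insert_commute)
    ultimately have "f 1 = f 3" by simp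
    hence "(1::nat) = 3" using assms by (intro inj_onD[OF inj]) auto
    thus False by simp
  qed
qed

lemma Fsel_sub: "Fsel n k \<subseteq> doubled_johnson n k"
proof
  fix e assume "e \<in> Fsel n k"
  then obtain B where B: "B \<subseteq> {0..<n}" "card B = k + 1" "e = {B - {Max B}, B}"
    unfolding Fsel_def by auto
  have "card (B - {Max B}) = k" using card_del_max[OF B(1,2)] by simp
  moreover have "B - {Max B} \<subseteq> {0..<n}" using B(1) by auto
  ultimately show "e \<in> doubled_johnson n k" unfolding doubled_johnson_def using B by blast
qed

lemma Fsel_card: "card (Fsel n k) = n choose (k + 1)"
proof -
  let ?S = "{B. B \<subseteq> {0..<n} \<and> card B = k + 1}"
  have "inj_on (\<lambda>B. {B - {Max B}, B}) ?S"
  proof (rule inj_onI)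
    fix B B' assume a: "B \<in> ?S" "B' \<in> ?S" "{B - {Max B}, B} = {B' - {Max B'}, B'}"
    have a2: "B' \<subseteq> {0..<n}" "card B' = k + 1" using a(2) by auto
    have c: "card (B' - {Max B'}) = k" by (rule card_del_max(1)[OF a2])
    have cB: "card B = k + 1" using a(1) by auto
    have "B \<noteq> B' - {Max B'}" using c cB by (metis n_not_Suc_n Suc_eq_plus1)
    moreover have "B \<in> {B' - {Max B'}, B'}" using a(3) by (metis insertCI)
    ultimately show "B = B'" by simp
  qed
  hence "card (Fsel n k) = card ?S" unfolding Fsel_def by (rule card_image)
  also have "\<dots> = n choose (k + 1)" using n_subsets[of "{0..<n}" "k+1"] by simp
  finally show ?thesis .
qed

lemma dj_card: "card (doubled_johnson n k) = (k + 1) * (n choose (k + 1))"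
proof -
  let ?S = "{B. B \<subseteq> {0..<n} \<and> card B = k + 1}"
  let ?P = "Sigma ?S (\<lambda>B. {A. A \<subseteq> B \<and> card A = k})"
  have eq: "doubled_johnson n k = (\<lambda>(B, A). {A, B}) ` ?P"
    unfolding doubled_johnson_def by (auto simp: image_iff)
  have inj: "inj_on (\<lambda>(B, A). {A, B}) ?P"
  proof (rule inj_onI)
    fix x y assume xy: "x \<in> ?P" "y \<in> ?P" "(\<lambda>(B, A). {A, B}) x = (\<lambda>(B, A). {A, B}) y"
    obtain B A where x: "x = (B, A)" by force
    obtain B' A' where y: "y = (B', A')" by force
    have xP: "(B, A) \<in> ?P" using xy(1) x by simp
    have yP: "(B', A') \<in> ?P" using xy(2) y by simp
    have cB: "card B = k + 1" "card A = k" using xP by auto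
    have cB': "card B' = k + 1" "card A' = k" using yP by auto
    have e: "{A, B} = {A', B'}" using xy(3) x y by simp
    have n: "B \<noteq> A'" using cB(1) cB'(2) by (metis n_not_Suc_n Suc_eq_plus1)
    have "B \<in> {A', B'}" using e by (metis insertCI)
    hence bb: "B = B'" using n by simp
    have "A \<in> {A', B'}" using e by (metis insertCI)
    moreover have "A \<noteq> B'" using cB(2) cB'(1) by (metis n_not_Suc_n Suc_eq_plus1)
    ultimately have "A = A'" by simp
    thus "x = y" using bb x y by simp
  qed
  have "card (doubled_johnson n k) = card ?P" unfolding eq by (rule card_image[OF inj])
  also have "\<dots> = (\<Sum>B\<in>?S. card {A. A \<subseteq> B \<and> card A = k})"
    proof (rule card_SigmaI)
    show "finite ?S" by (rule finite_subset[of _ "Pow {0..<n}"]) auto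
    show "\<forall>B\<in>?S. finite {A. A \<subseteq> B \<and> card A = k}"
    proof
    fix B assume "B \<in> ?S"
    hence fB: "finite B" by (auto intro: finite_subset)
    have sub: "{A. A \<subseteq> B \<and> card A = k} \<subseteq> Pow B" by auto
    show "finite {A. A \<subseteq> B \<and> card A = k}" using finite_subset[OF sub] fB by simp
    qed
  qed
  also have "\<dots> = (\<Sum>B\<in>?S. k + 1)"
  proof (rule sum.cong)
    fix B assume "B \<in> ?S"
    hence "finite B" "card B = k + 1" by (auto intro: finite_subset)
    thus "card {A. A \<subseteq> B \<and> card A = k} = k + 1" using n_subsets[of B k] by simp
  qed simp
  also have "\<dots> = (k + 1) * (n choose (k + 1))" using n_subsets[of "{0..<n}" "k+1"] by simp
  finally show ?thesis .
qed

theorem mainTheorem6: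
  fixes n k l :: nat
  assumes "k \<ge> 1" and "n \<ge> 2 * k + 1" and "l \<ge> 2"
  shows "ex_cycle (doubled_johnson n k) (2 * l) \<ge> n choose (k + 1)
         \<and> (k + 1) * (n choose (k + 1)) = card (doubled_johnson n k)"
proof
  have fin: "finite (doubled_johnson n k)"
  proof (rule finite_subset)
    show "doubled_johnson n k \<subseteq> Pow (Pow {0..<n})" unfolding doubled_johnson_def by auto
  qed simp
  have fs: "finite {card F | F. F \<subseteq> doubled_johnson n k \<and> \<not> contains_cycle F (2 * l)}"
    using fin by simp
  have "card (Fsel n k) \<in> {card F | F. F \<subseteq> doubled_johnson n k \<and> \<not> contains_cycle F (2 * l)}"
    using Fsel_sub Fsel_nocycle[of "2 * l" n k] assms(3) by auto
  hence "card (Fsel n k) \<le> ex_cycle (doubled_johnson n k) (2 * l)"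
    unfolding ex_cycle_def using fs by simp
  thus "ex_cycle (doubled_johnson n k) (2 * l) \<ge> n choose (k + 1)" using Fsel_card by simp
next
  show "(k + 1) * (n choose (k + 1)) = card (doubled_johnson n k)" using dj_card by simp
qed

end
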